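(* Under the standing setup below, for each $i\in\{1,2\}$, every connected component of the graph obtained from $G_i$ by deleting all vertices of $p_i$ is adjacent to exactly two vertices of $p_i$.
   Context: A biconnected graph is series-parallel if it contains no subdivision of $K_4$. A separation pair of a biconnected graph $G$ is a pair $(s,t)$ with $G-s-t$ disconnected; a transitive edge is an edge joining the two vertices of a separation pair. A component w.r.t. $(s,t)$ is the subgraph induced by $s$, $t$ and the vertex set of one connected component of $G-s-t$; vertices other than $s,t$ are internal. A component is heavy if it has an internal vertex adjacent to neither $s$ nor $t$. Standing setup: $G$ is a biconnected series-parallel graph without transitive edges such that every separation pair has at most two heavy components, and $G$ has at least one separation pair. $(s,t)$ is a separation pair of $G$ whose number $k$ of heavy components is maximum over all separation pairs. $G_1$ and $G_2$ are two distinct components w.r.t. $(s,t)$, chosen so that $G_1$ is heavy if $k\ge 1$ and $G_2$ is heavy if $k=2$. For $i\in\{1,2\}$, $p_i$ is a longest $s$–$t$ path in $G_i$. *)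

theory Defs
  imports Main
begin

definition graph :: "'a set \<Rightarrow> 'a set set \<Rightarrow> bool" where
  "graph V E \<longleftrightarrow> finite V \<and> (\<forall>e\<in>E. e \<subseteq> V \<and> card e = 2)"

definition is_path :: "'a set set \<Rightarrow> 'a list \<Rightarrow> bool" where
  "is_path E xs \<longleftrightarrow> xs \<noteq> [] \<and> distinct xs \<and>
     (\<forall>i. Suc i < length xs \<longrightarrow> {xs ! i, xs ! Suc i} \<in> E)"

definition path_in :: "'a set set \<Rightarrow> 'a set \<Rightarrow> 'a list \<Rightarrow> bool" where
  "path_in E W xs \<longleftrightarrow> is_path E xs \<and> set xs \<subseteq> W"

definition reach_in :: "'a set set \<Rightarrow> 'a set \<Rightarrow> 'a \<Rightarrow> 'a \<Rightarrow> bool" where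
  "reach_in E W x y \<longleftrightarrow> (\<exists>xs. path_in E W xs \<and> hd xs = x \<and> last xs = y)"

definition connected_on :: "'a set set \<Rightarrow> 'a set \<Rightarrow> bool" where
  "connected_on E W \<longleftrightarrow> W \<noteq> {} \<and> (\<forall>x\<in>W. \<forall>y\<in>W. reach_in E W x y)"

definition conn_comp :: "'a set set \<Rightarrow> 'a set \<Rightarrow> 'a set \<Rightarrow> bool" where
  "conn_comp E W C \<longleftrightarrow> (\<exists>x\<in>W. C = {y\<in>W. reach_in E W x y})"

definition biconnected :: "'a set \<Rightarrow> 'a set set \<Rightarrow> bool" where
  "biconnected V E \<longleftrightarrow> card V \<ge> 3 \<and> connected_on E V \<and>
     (\<forall>v\<in>V. connected_on E (V - {v}))"

definition has_K4_subdivision :: "'a set \<Rightarrow> 'a set set \<Rightarrow> bool" where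
  "has_K4_subdivision V E \<longleftrightarrow>
     (\<exists>(f :: nat \<Rightarrow> 'a) (P :: nat \<Rightarrow> nat \<Rightarrow> 'a list).
        inj_on f {..<4} \<and> f ` {..<4} \<subseteq> V \<and>
        (\<forall>i j. i < j \<and> j < 4 \<longrightarrow>
            path_in E V (P i j) \<and> hd (P i j) = f i \<and> last (P i j) = f j \<and>
            set (P i j) \<inter> f ` {..<4} = {f i, f j}) \<and>
        (\<forall>i j i' j'. i < j \<and> j < 4 \<and> i' < j' \<and> j' < 4 \<and> (i, j) \<noteq> (i', j') \<longrightarrow>
            set (P i j) \<inter> set (P i' j') \<subseteq> f ` {..<4}))"

definition series_parallel :: "'a set \<Rightarrow> 'a set set \<Rightarrow> bool" where
  "series_parallel V E \<longleftrightarrow> biconnected V E \<and> \<not> has_K4_subdivision V E"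

definition sep_pair :: "'a set \<Rightarrow> 'a set set \<Rightarrow> 'a \<Rightarrow> 'a \<Rightarrow> bool" where
  "sep_pair V E s t \<longleftrightarrow> s \<in> V \<and> t \<in> V \<and> s \<noteq> t \<and>
     (\<exists>x\<in>V - {s, t}. \<exists>y\<in>V - {s, t}. \<not> reach_in E (V - {s, t}) x y)"

definition no_transitive_edges :: "'a set \<Rightarrow> 'a set set \<Rightarrow> bool" where
  "no_transitive_edges V E \<longleftrightarrow> (\<forall>s t. sep_pair V E s t \<longrightarrow> {s, t} \<notin> E)"

text \<open>Components w.r.t. (s,t) are represented by their sets C of internal vertices
  (a connected component of G - s - t); the component itself is the subgraph
  induced by C \<union> {s,t}.\<close>
definition comp_wrt :: "'a set \<Rightarrow> 'a set set \<Rightarrow> 'a \<Rightarrow> 'a \<Rightarrow> 'a set \<Rightarrow> bool" where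
  "comp_wrt V E s t C \<longleftrightarrow> conn_comp E (V - {s, t}) C"

definition heavy :: "'a set set \<Rightarrow> 'a \<Rightarrow> 'a \<Rightarrow> 'a set \<Rightarrow> bool" where
  "heavy E s t C \<longleftrightarrow> (\<exists>v\<in>C. {v, s} \<notin> E \<and> {v, t} \<notin> E)"

definition num_heavy :: "'a set \<Rightarrow> 'a set set \<Rightarrow> 'a \<Rightarrow> 'a \<Rightarrow> nat" where
  "num_heavy V E s t = card {C. comp_wrt V E s t C \<and> heavy E s t C}"

definition longest_st_path :: "'a set set \<Rightarrow> 'a \<Rightarrow> 'a \<Rightarrow> 'a set \<Rightarrow> 'a list \<Rightarrow> bool" where
  "longest_st_path E s t C p \<longleftrightarrow>
     path_in E (C \<union> {s, t}) p \<and> hd p = s \<and> last p = t \<and>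
     (\<forall>q. path_in E (C \<union> {s, t}) q \<and> hd q = s \<and> last q = t \<longrightarrow> length q \<le> length p)"

definition comps_attach_twice :: "'a set set \<Rightarrow> 'a \<Rightarrow> 'a \<Rightarrow> 'a set \<Rightarrow> 'a list \<Rightarrow> bool" where
  "comps_attach_twice E s t C p \<longleftrightarrow>
     (\<forall>D. conn_comp E ((C \<union> {s, t}) - set p) D \<longrightarrow>
        card {x \<in> set p. \<exists>y\<in>D. {x, y} \<in> E} = 2)"

end

theory Submission
  imports Defs
begin


definition adjW :: "'a set set \<Rightarrow> 'a set \<Rightarrow> 'a \<Rightarrow> 'a \<Rightarrow> bool" where
  "adjW E W u v \<longleftrightarrow> {u,v} \<in> E \<and> u \<in> W \<and> v \<in> W"

lemma is_path_iff:
  "is_path E xs \<longleftrightarrow> xs \<noteq> [] \<and> distinct xs \<and> successively (\<lambda>x y. {x,y} \<in> E) xs"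
  unfolding is_path_def successively_conv_nth by blast

lemma path_in_iff:
  "path_in E W xs \<longleftrightarrow> xs \<noteq> [] \<and> distinct xs \<and> successively (\<lambda>x y. {x,y} \<in> E) xs \<and> set xs \<subseteq> W"
  unfolding path_in_def is_path_iff by blast

lemma adjW_sym: "adjW E W u v \<Longrightarrow> adjW E W v u"
  unfolding adjW_def by (simp add: insert_commute)

lemma rt_sym: "(adjW E W)\<^sup>*\<^sup>* u v \<Longrightarrow> (adjW E W)\<^sup>*\<^sup>* v u"
proof (induction rule: rtranclp_induct)
  case base then show ?case by simp
next
  case (step y z)
  then show ?case using adjW_sym
    by (metis converse_rtranclp_into_rtranclp)
qed

lemma path_rt: "path_in E W xs \<Longrightarrow> \<forall>y\<in>set xs. (adjW E W)\<^sup>*\<^sup>* (hd xs) y"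
proof (induction xs)
  case Nil then show ?case by simp
next
  case (Cons x xs)
  show ?case
  proof (cases "xs = []")
    case True then show ?thesis by simp
  next
    case False
    have p: "path_in E W xs" using Cons.prems False
      by (auto simp: path_in_iff successively_Cons)
    have a: "adjW E W x (hd xs)" using Cons.prems False
      by (auto simp: path_in_iff successively_Cons adjW_def)
    show ?thesis using Cons.IH[OF p] a
      by (auto intro: converse_rtranclp_into_rtranclp)
  qed
qed

lemma rt_path: "(adjW E W)\<^sup>*\<^sup>* x y \<Longrightarrow> x \<in> W \<Longrightarrow> reach_in E W x y"
proof (induction rule: rtranclp_induct)
  case base
  then show ?case unfolding reach_in_def
    by (rule_tac x="[x]" in exI) (simp add: path_in_iff)
next
  case (step y z)
  then obtain xs where xs: "path_in E W xs" "hd xs = x" "last xs = y"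
    unfolding reach_in_def by blast
  show ?case
  proof (cases "z \<in> set xs")
    case True
    then obtain us vs where uv: "xs = us @ z # vs" by (meson split_list)
    have "path_in E W (us @ [z])" using xs(1) unfolding uv
      by (auto simp: path_in_iff successively_append_iff successively_Cons)
    moreover have "hd (us @ [z]) = x" using xs(2) uv by (cases us) auto
    ultimately show ?thesis unfolding reach_in_def by (rule_tac x="us @ [z]" in exI) simp
  next
    case False
    have "xs \<noteq> []" using xs(1) by (simp add: path_in_iff)
    then have "path_in E W (xs @ [z])" using xs False step(2)
      by (auto simp: path_in_iff successively_append_iff adjW_def)
    moreover have "hd (xs @ [z]) = x" using xs(2) \<open>xs \<noteq> []\<close> by simp
    ultimately show ?thesis unfolding reach_in_def by (rule_tac x="xs @ [z]" in exI) simp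
  qed
qed

lemma reach_iff: "reach_in E W x y \<longleftrightarrow> x \<in> W \<and> (adjW E W)\<^sup>*\<^sup>* x y"
proof
  assume "reach_in E W x y"
  then obtain xs where xs: "path_in E W xs" "hd xs = x" "last xs = y"
    unfolding reach_in_def by blast
  then have ne: "xs \<noteq> []" by (simp add: path_in_iff)
  have "hd xs \<in> set xs" using ne by simp
  then have "x \<in> W" using xs(1,2) unfolding path_in_def by blast
  moreover have "last xs \<in> set xs" using ne by simp
  then have "(adjW E W)\<^sup>*\<^sup>* x y" using path_rt[OF xs(1)] xs(2,3) by blast
  ultimately show "x \<in> W \<and> (adjW E W)\<^sup>*\<^sup>* x y" by simp
next
  assume "x \<in> W \<and> (adjW E W)\<^sup>*\<^sup>* x y"
  then show "reach_in E W x y" using rt_path[of E W x y] by simp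
qed

lemma rt_in: "(adjW E W)\<^sup>*\<^sup>* x y \<Longrightarrow> x \<in> W \<Longrightarrow> y \<in> W"
  by (induction rule: rtranclp_induct) (auto simp: adjW_def)

lemma conn_comp_iff: "conn_comp E W D \<longleftrightarrow> (\<exists>x\<in>W. D = {y. (adjW E W)\<^sup>*\<^sup>* x y})"
proof -
  have "x \<in> W \<Longrightarrow> {y\<in>W. reach_in E W x y} = {y. (adjW E W)\<^sup>*\<^sup>* x y}" for x
    using rt_in[of E W x] reach_iff[of E W x] by auto
  then show ?thesis unfolding conn_comp_def by auto
qed

lemma comp_sub: "conn_comp E W D \<Longrightarrow> D \<subseteq> W"
  unfolding conn_comp_def by auto

lemma comp_ne: "conn_comp E W D \<Longrightarrow> D \<noteq> {}"
  unfolding conn_comp_iff by auto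

lemma comp_closed: "conn_comp E W D \<Longrightarrow> u \<in> D \<Longrightarrow> y \<in> W \<Longrightarrow> {u,y} \<in> E \<Longrightarrow> y \<in> D"
proof -
  assume a: "conn_comp E W D" "u \<in> D" "y \<in> W" "{u,y} \<in> E"
  then obtain x where x: "x \<in> W" "D = {y. (adjW E W)\<^sup>*\<^sup>* x y}" unfolding conn_comp_iff by blast
  then have "(adjW E W)\<^sup>*\<^sup>* x u" using a(2) by blast
  then have "u \<in> W" using rt_in[of E W x u] x(1) by blast
  then have "adjW E W u y" using a by (simp add: adjW_def)
  then show "y \<in> D" using a x by (auto intro: rtranclp.rtrancl_into_rtrancl)
qed

lemma comp_rt: "conn_comp E W D \<Longrightarrow> u \<in> D \<Longrightarrow> v \<in> D \<Longrightarrow> (adjW E W)\<^sup>*\<^sup>* u v"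
  unfolding conn_comp_iff by (auto intro: rt_sym rtranclp_trans)

lemma comp_disj: "conn_comp E W D1 \<Longrightarrow> conn_comp E W D2 \<Longrightarrow> D1 \<noteq> D2 \<Longrightarrow> D1 \<inter> D2 = {}"
proof -
  assume a: "conn_comp E W D1" "conn_comp E W D2" "D1 \<noteq> D2"
  then obtain x1 x2 where x: "D1 = {y. (adjW E W)\<^sup>*\<^sup>* x1 y}" "D2 = {y. (adjW E W)\<^sup>*\<^sup>* x2 y}"
    unfolding conn_comp_iff by blast
  show ?thesis
  proof (rule ccontr)
    assume "D1 \<inter> D2 \<noteq> {}"
    then obtain v where "(adjW E W)\<^sup>*\<^sup>* x1 v" "(adjW E W)\<^sup>*\<^sup>* x2 v" using x by blast
    then have "(adjW E W)\<^sup>*\<^sup>* x1 x2" "(adjW E W)\<^sup>*\<^sup>* x2 x1"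
      by (meson rt_sym rtranclp_trans)+
    then have "D1 = D2" unfolding x by (auto intro: rtranclp_trans)
    then show False using a by simp
  qed
qed

lemma rt_restrict: "(adjW E W)\<^sup>*\<^sup>* u v \<Longrightarrow> conn_comp E W D \<Longrightarrow> u \<in> D \<Longrightarrow> (adjW E D)\<^sup>*\<^sup>* u v"
proof (induction rule: rtranclp_induct)
  case base then show ?case by simp
next
  case (step y z)
  have "y \<in> D" using rt_in[OF step.IH[OF step.prems]] step.prems by blast
  then have "z \<in> D" using comp_closed[OF step.prems(1) \<open>y \<in> D\<close>] step(2) by (auto simp: adjW_def)
  then have "adjW E D y z" using \<open>y \<in> D\<close> step(2) by (auto simp: adjW_def)
  then show ?case using step by (meson rtranclp.rtrancl_into_rtrancl)
qed

lemma comp_path: "conn_comp E W D \<Longrightarrow> u \<in> D \<Longrightarrow> v \<in> D \<Longrightarrow>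
  \<exists>xs. path_in E D xs \<and> hd xs = u \<and> last xs = v"
proof -
  assume a: "conn_comp E W D" "u \<in> D" "v \<in> D"
  have "(adjW E W)\<^sup>*\<^sup>* u v" using comp_rt[OF a] .
  then have "(adjW E D)\<^sup>*\<^sup>* u v" using rt_restrict a(1,2) by metis
  then have "reach_in E D u v" using rt_path a(2) by metis
  then show ?thesis unfolding reach_in_def .
qed

lemma escape: "path_in E W xs \<Longrightarrow> hd xs \<in> A \<Longrightarrow> last xs \<notin> A \<Longrightarrow>
  \<exists>u y. u \<in> A \<and> y \<notin> A \<and> y \<in> W \<and> {u,y} \<in> E"
proof (induction xs)
  case Nil then show ?case by (simp add: path_in_iff)
next
  case (Cons x xs)
  then have ne: "xs \<noteq> []" by auto
  have p: "path_in E W xs" using Cons.prems ne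
    by (auto simp: path_in_iff successively_Cons)
  have e: "{x, hd xs} \<in> E" "hd xs \<in> W" using Cons.prems ne
    by (auto simp: path_in_iff successively_Cons)
  show ?case
  proof (cases "hd xs \<in> A")
    case True then show ?thesis using Cons.IH[OF p] Cons.prems ne by simp
  next
    case False then show ?thesis using e Cons.prems by auto
  qed
qed

lemma first_hit: "is_path E xs \<Longrightarrow> last xs \<in> A \<Longrightarrow>
  \<exists>ys. is_path E ys \<and> hd ys = hd xs \<and> last ys \<in> A \<and> set ys \<subseteq> set xs \<and> set (butlast ys) \<inter> A = {}"
proof (induction xs)
  case Nil then show ?case by (simp add: is_path_def)
next
  case (Cons x xs)
  show ?case
  proof (cases "x \<in> A")
    case True then show ?thesis
      by (rule_tac x="[x]" in exI) (simp add: is_path_iff)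
  next
    case False
    then have ne: "xs \<noteq> []" using Cons.prems by auto
    have p: "is_path E xs" using Cons.prems ne
      by (auto simp: is_path_iff successively_Cons)
    obtain ys where ys: "is_path E ys" "hd ys = hd xs" "last ys \<in> A" "set ys \<subseteq> set xs"
        "set (butlast ys) \<inter> A = {}"
      using Cons.IH[OF p] Cons.prems ne by auto
    have yne: "ys \<noteq> []" using ys(1) by (simp add: is_path_iff)
    have "is_path E (x # ys)" using ys Cons.prems yne ne
      by (auto simp: is_path_iff successively_Cons)
    moreover have "set (butlast (x # ys)) \<inter> A = {}" using ys(5) False yne by simp
    ultimately show ?thesis using ys yne by (rule_tac x="x # ys" in exI) auto
  qed
qed



lemma pairs4: "i < j \<Longrightarrow> j < (4::nat) \<Longrightarrow>
  (i = 0 \<and> j = 1) \<or> (i = 0 \<and> j = 2) \<or> (i = 0 \<and> j = 3) \<or> (i = 1 \<and> j = 2) \<or> (i = 1 \<and> j = 3) \<or> (i = 2 \<and> j = 3)"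
  by presburger

lemma k4_intro:
  assumes d: "distinct [a,b,c,z]" and sub: "{a,b,c,z} \<subseteq> V"
  and p01: "path_in E V P01" "hd P01 = a" "last P01 = b" "set P01 \<inter> {a,b,c,z} = {a,b}"
  and p02: "path_in E V P02" "hd P02 = a" "last P02 = c" "set P02 \<inter> {a,b,c,z} = {a,c}"
  and p03: "path_in E V P03" "hd P03 = a" "last P03 = z" "set P03 \<inter> {a,b,c,z} = {a,z}"
  and p12: "path_in E V P12" "hd P12 = b" "last P12 = c" "set P12 \<inter> {a,b,c,z} = {b,c}"
  and p13: "path_in E V P13" "hd P13 = b" "last P13 = z" "set P13 \<inter> {a,b,c,z} = {b,z}"
  and p23: "path_in E V P23" "hd P23 = c" "last P23 = z" "set P23 \<inter> {a,b,c,z} = {c,z}"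
  and i1: "set P01 \<inter> set P02 \<subseteq> {a,b,c,z}" "set P01 \<inter> set P03 \<subseteq> {a,b,c,z}"
     "set P01 \<inter> set P12 \<subseteq> {a,b,c,z}" "set P01 \<inter> set P13 \<subseteq> {a,b,c,z}" "set P01 \<inter> set P23 \<subseteq> {a,b,c,z}"
  and i2: "set P02 \<inter> set P03 \<subseteq> {a,b,c,z}"
     "set P02 \<inter> set P12 \<subseteq> {a,b,c,z}" "set P02 \<inter> set P13 \<subseteq> {a,b,c,z}" "set P02 \<inter> set P23 \<subseteq> {a,b,c,z}"
  and i3: "set P03 \<inter> set P12 \<subseteq> {a,b,c,z}" "set P03 \<inter> set P13 \<subseteq> {a,b,c,z}" "set P03 \<inter> set P23 \<subseteq> {a,b,c,z}"
  and i4: "set P12 \<inter> set P13 \<subseteq> {a,b,c,z}" "set P12 \<inter> set P23 \<subseteq> {a,b,c,z}"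
  and i5: "set P13 \<inter> set P23 \<subseteq> {a,b,c,z}"
  shows "has_K4_subdivision V E"
proof -
  define f where "f = (\<lambda>i. [a,b,c,z] ! i)"
  define P where "P = (\<lambda>i j. [[[],P01,P02,P03],[[],[],P12,P13],[[],[],[],P23]] ! i ! j)"
  have L: "{..<4::nat} = {0,1,2,3}" by auto
  have fim: "f ` {..<4} = {a,b,c,z}" unfolding L f_def by simp
  have inj: "inj_on f {..<4}" unfolding L f_def inj_on_def using d by auto
  have A: "\<forall>i j. i < j \<and> j < 4 \<longrightarrow>
            path_in E V (P i j) \<and> hd (P i j) = f i \<and> last (P i j) = f j \<and>
            set (P i j) \<inter> f ` {..<4} = {f i, f j}"
  proof (intro allI impI)
    fix i j :: nat assume h: "i < j \<and> j < 4"
    have ij: "(i = 0 \<and> j = 1) \<or> (i = 0 \<and> j = 2) \<or> (i = 0 \<and> j = 3) \<or> (i = 1 \<and> j = 2) \<or> (i = 1 \<and> j = 3) \<or> (i = 2 \<and> j = 3)"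
      using pairs4[of i j] h by blast
    then show "path_in E V (P i j) \<and> hd (P i j) = f i \<and> last (P i j) = f j \<and>
            set (P i j) \<inter> f ` {..<4} = {f i, f j}"
      unfolding fim
      by (elim disjE) (simp_all add: P_def f_def p01 p02 p03 p12 p13 p23)
  qed
  have B: "\<forall>i j i' j'. i < j \<and> j < 4 \<and> i' < j' \<and> j' < 4 \<and> (i, j) \<noteq> (i', j') \<longrightarrow>
            set (P i j) \<inter> set (P i' j') \<subseteq> f ` {..<4}"
  proof (intro allI impI)
    fix i j i' j' :: nat assume h: "i < j \<and> j < 4 \<and> i' < j' \<and> j' < 4 \<and> (i, j) \<noteq> (i', j')"
    have ij: "(i = 0 \<and> j = 1) \<or> (i = 0 \<and> j = 2) \<or> (i = 0 \<and> j = 3) \<or> (i = 1 \<and> j = 2) \<or> (i = 1 \<and> j = 3) \<or> (i = 2 \<and> j = 3)"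
      using pairs4[of i j] h by blast
    have ij': "(i' = 0 \<and> j' = 1) \<or> (i' = 0 \<and> j' = 2) \<or> (i' = 0 \<and> j' = 3) \<or> (i' = 1 \<and> j' = 2) \<or> (i' = 1 \<and> j' = 3) \<or> (i' = 2 \<and> j' = 3)"
      using pairs4[of i' j'] h by blast
    note I = i1 i2 i3 i4 i5
    show "set (P i j) \<inter> set (P i' j') \<subseteq> f ` {..<4}"
      unfolding fim using ij ij' h
      apply (elim disjE)
                          apply (simp_all add: P_def I)
      apply (metis I Int_commute)+
      done
  qed
  show ?thesis unfolding has_K4_subdivision_def
    apply (rule exI[of _ f], rule exI[of _ P])
    using inj fim sub A B by simp
qed



lemma succ_infix: "successively P (xs @ ys @ zs) \<Longrightarrow> successively P ys"
  by (simp add: successively_append_iff)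

lemma succ_sym_E: "successively (\<lambda>x y. {y, x} \<in> E) xs = successively (\<lambda>x y. {x, y} \<in> E) xs"
  by (simp add: insert_commute)

lemma graph_edge: "graph V E \<Longrightarrow> {x,y} \<in> E \<Longrightarrow> x \<in> V \<and> y \<in> V"
  unfolding graph_def by blast

lemma attach_comp:
  assumes G: "graph V E" and bc: "biconnected V E" and st: "s \<in> V" "t \<in> V" "s \<noteq> t"
    and C: "conn_comp E (V - {s,t}) C"
  shows "\<exists>u\<in>C. {s,u} \<in> E"
proof -
  have con: "connected_on E (V - {t})" using bc st unfolding biconnected_def by blast
  obtain v where v: "v \<in> C" using comp_ne[OF C] by blast
  have vV: "v \<in> V - {t}" using comp_sub[OF C] v by blast
  have sV: "s \<in> V - {t}" using st by blast
  obtain xs where xs: "path_in E (V - {t}) xs" "hd xs = v" "last xs = s"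
    using con vV sV unfolding connected_on_def reach_in_def by blast
  have "s \<notin> C" using comp_sub[OF C] by blast
  then obtain u y where uy: "u \<in> C" "y \<notin> C" "y \<in> V - {t}" "{u,y} \<in> E"
    using escape[OF xs(1)] xs v by metis
  have "y = s"
  proof (rule ccontr)
    assume "y \<noteq> s"
    then have "y \<in> V - {s,t}" using uy by blast
    then have "y \<in> C" using comp_closed[OF C uy(1) _ uy(4)] by blast
    then show False using uy by blast
  qed
  then show ?thesis using uy by (metis insert_commute)
qed



lemma len3: "3 \<le> length xs \<Longrightarrow> \<exists>a b c r. xs = a#b#c#r"
  by (auto simp: numeral_3_eq_3 Suc_le_length_iff)

lemma succ_rev_E: "successively (\<lambda>x y. {x,y} \<in> E) xs \<Longrightarrow> successively (\<lambda>x y. {x,y} \<in> E) (rev xs)"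
  by (subst successively_rev) (simp add: succ_sym_E)

lemma succ_app3: "successively P xs \<Longrightarrow> successively P ys \<Longrightarrow> successively P zs \<Longrightarrow>
  xs \<noteq> [] \<Longrightarrow> ys \<noteq> [] \<Longrightarrow> zs \<noteq> [] \<Longrightarrow> P (last xs) (hd ys) \<Longrightarrow> P (last ys) (hd zs) \<Longrightarrow>
  successively P (xs @ ys @ zs)"
  by (simp add: successively_append_iff)

lemma distinct_infix: "distinct (xs @ ys @ zs) \<Longrightarrow> distinct ys" by simp

lemma distinct_outer: "distinct (xs @ ys @ zs) \<Longrightarrow> set xs \<inter> set zs = {}" by auto

lemma main_lemma:
  assumes G: "graph V E" and bc: "biconnected V E" and nk4: "\<not> has_K4_subdivision V E"
    and st: "s \<in> V" "t \<in> V" "s \<noteq> t"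
    and C: "comp_wrt V E s t C" and C': "comp_wrt V E s t C'" and CC: "C \<noteq> C'"
    and p: "path_in E (C \<union> {s,t}) p" "hd p = s" "last p = t"
  shows "comps_attach_twice E s t C p"
  unfolding comps_attach_twice_def
proof (intro allI impI)
  fix D assume Dc: "conn_comp E ((C \<union> {s,t}) - set p) D"
  define N where "N = {x \<in> set p. \<exists>y\<in>D. {x, y} \<in> E}"
  have Cc: "conn_comp E (V - {s,t}) C" using C unfolding comp_wrt_def .
  have C'c: "conn_comp E (V - {s,t}) C'" using C' unfolding comp_wrt_def .
  have pne: "p \<noteq> []" using p(1) by (simp add: path_in_iff)
  have sp: "s \<in> set p" using pne p(2) hd_in_set by force
  have tp: "t \<in> set p" using pne p(3) last_in_set by force
  have setp: "set p \<subseteq> C \<union> {s,t}" using p(1) by (simp add: path_in_iff)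
  have CV: "C \<subseteq> V - {s,t}" using comp_sub[OF Cc] .
  have C'V: "C' \<subseteq> V - {s,t}" using comp_sub[OF C'c] .
  have CC': "C \<inter> C' = {}" using comp_disj[OF Cc C'c CC] .
  have DC: "D \<subseteq> C" "D \<inter> set p = {}" using comp_sub[OF Dc] sp tp by auto
  have pV: "set p \<subseteq> V" using setp CV st by blast
  have closC: "y \<in> C" if "u \<in> C" "{u,y} \<in> E" "y \<notin> {s,t}" for u y
    using comp_closed[OF Cc that(1) _ that(2)] graph_edge[OF G that(2)] that(3) by blast
  have F1: "y \<in> D \<or> y \<in> N" if "u \<in> D" "{u,y} \<in> E" for u y
  proof -
    have uC: "u \<in> C" using that DC by blast
    have "y \<in> C \<union> {s,t}" using closC[OF uC that(2)] by blast
    show ?thesis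
    proof (cases "y \<in> set p")
      case True
      have "{y,u} \<in> E" using that(2) by (simp add: insert_commute)
      then show ?thesis unfolding N_def using True that(1) by blast
    next
      case False
      then show ?thesis using comp_closed[OF Dc that(1) _ that(2)] \<open>y \<in> C \<union> {s,t}\<close> by blast
    qed
  qed
  have finN: "finite N" unfolding N_def by simp
  have lower: "card N \<ge> 2"
  proof (rule ccontr)
    assume "\<not> card N \<ge> 2"
    then have "card N = 0 \<or> card N = 1" by linarith
    then obtain x0 where x0: "N \<subseteq> {x0}" "x0 \<in> set p"
    proof
      assume "card N = 0" then have "N = {}" using finN by simp
      then show thesis using that tp by blast
    next
      assume "card N = 1" then obtain x where "N = {x}" using card_1_singletonE by blast
      then show thesis using that unfolding N_def by blast
    qed
    have "\<exists>w. w \<in> set p \<and> w \<noteq> x0" using sp tp st(3) by blast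
    then obtain w where w: "w \<in> set p" "w \<noteq> x0" by blast
    have con: "connected_on E (V - {x0})" using bc x0(2) pV unfolding biconnected_def by blast
    obtain d where d: "d \<in> D" using comp_ne[OF Dc] by blast
    have dV: "d \<in> V - {x0}" using d DC CV x0(2) by blast
    have wV: "w \<in> V - {x0}" using w pV by blast
    obtain xs where xs: "path_in E (V - {x0}) xs" "hd xs = d" "last xs = w"
      using con dV wV unfolding connected_on_def reach_in_def by blast
    have "w \<notin> D" using w DC by blast
    then have "\<exists>u y. u \<in> D \<and> y \<notin> D \<and> y \<in> V - {x0} \<and> {u,y} \<in> E"
      using escape[OF xs(1)] xs(2,3) d by blast
    then obtain u y where uy: "u \<in> D" "y \<notin> D" "y \<in> V - {x0}" "{u,y} \<in> E" by blast
    then show False using F1[OF uy(1) uy(4)] x0 by blast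
  qed
  have upper: "card N \<le> 2"
  proof (rule ccontr)
    assume "\<not> card N \<le> 2"
    then have N3: "card N \<ge> 3" by simp
    define fl where "fl = filter (\<lambda>x. x \<in> N) p"
    have "set fl = N" unfolding fl_def N_def by auto
    moreover have "distinct fl" unfolding fl_def using p(1) by (simp add: path_in_iff)
    ultimately have "length fl \<ge> 3" using N3 distinct_card[of fl] by simp
    then have "\<exists>a b c rest. fl = a # b # c # rest" by (rule len3)
    then obtain a b c rest where fl: "fl = a # b # c # rest" by (elim exE)
    have "filter (\<lambda>x. x \<in> N) p = a # b # c # rest" using fl unfolding fl_def .
    from filter_eq_ConsD[OF this] obtain L1 X1 where
      X1: "p = L1 @ a # X1" "a \<in> N" "b # c # rest = filter (\<lambda>x. x \<in> N) X1"
      by (elim exE conjE) simp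
    from filter_eq_ConsD[OF X1(3)[symmetric]] obtain L2 X2 where
      X2: "X1 = L2 @ b # X2" "b \<in> N" "c # rest = filter (\<lambda>x. x \<in> N) X2"
      by (elim exE conjE) simp
    from filter_eq_ConsD[OF X2(3)[symmetric]] obtain L3 L4 where
      X3: "X2 = L3 @ c # L4" "c \<in> N"
      by (elim exE conjE) simp
    have pdec: "p = L1 @ a # L2 @ b # L3 @ c # L4" using X1(1) X2(1) X3(1) by simp
    have pdist: "distinct (L1 @ a # L2 @ b # L3 @ c # L4)" using p(1) pdec by (simp add: path_in_iff)
    have psucc: "successively (\<lambda>x y. {x,y} \<in> E) (L1 @ a # L2 @ b # L3 @ c # L4)"
      using p(1) pdec by (simp add: path_in_iff)
    have pset: "set (L1 @ a # L2 @ b # L3 @ c # L4) \<subseteq> C \<union> {s,t}" using setp pdec by simp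
    have hdL1: "hd (L1 @ [a]) = s" using p(2) pdec by (cases L1) auto
    have lastL4: "last (c # L4) = t" using p(3) pdec by (cases L4) auto
    obtain da where da: "da \<in> D" "{a,da} \<in> E" using X1(2) unfolding N_def by blast
    obtain db where db: "db \<in> D" "{b,db} \<in> E" using X2(2) unfolding N_def by blast
    obtain dc where dc: "dc \<in> D" "{c,dc} \<in> E" using X3(2) unfolding N_def by blast
    obtain R where R: "path_in E D R" "hd R = da" "last R = db" using comp_path[OF Dc da(1) db(1)] by blast
    obtain S0 where S0: "path_in E D S0" "hd S0 = dc" "last S0 = da" using comp_path[OF Dc dc(1) da(1)] by blast
    have Rne: "R \<noteq> []" using R(1) by (simp add: path_in_iff)
    have "last S0 \<in> set R" using S0(3) R(2) Rne hd_in_set by force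
    then have "\<exists>ys. is_path E ys \<and> hd ys = hd S0 \<and> last ys \<in> set R \<and> set ys \<subseteq> set S0 \<and> set (butlast ys) \<inter> set R = {}"
      using first_hit[of E S0 "set R"] S0(1) unfolding path_in_def by blast
    then obtain S where S: "is_path E S" "hd S = dc" "last S \<in> set R" "set S \<subseteq> set S0" "set (butlast S) \<inter> set R = {}"
      using S0(2) by blast
    define z where "z = last S"
    define S' where "S' = butlast S"
    have Sne: "S \<noteq> []" using S(1) by (simp add: is_path_iff)
    have Sdec: "S = S' @ [z]" unfolding S'_def z_def using Sne by simp
    obtain R1 R2 where Rdec: "R = R1 @ z # R2" using S(3) unfolding z_def by (meson split_list)
    have SD: "set S \<subseteq> D" using S(4) S0(1) unfolding path_in_def by blast
    have RD: "set R \<subseteq> D" using R(1) unfolding path_in_def by blast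
    obtain us where us: "us \<in> C'" "{s,us} \<in> E" using attach_comp[OF G bc st C'c] by blast
    have C'c2: "conn_comp E (V - {t,s}) C'" using C'c by (simp add: insert_commute)
    obtain ut where ut: "ut \<in> C'" "{t,ut} \<in> E" using attach_comp[OF G bc st(2) st(1) st(3)[symmetric] C'c2] by blast
    obtain Q where Q: "path_in E C' Q" "hd Q = us" "last Q = ut" using comp_path[OF C'c us(1) ut(1)] by blast
    define P01 where "P01 = a # L2 @ [b]"
    define P12 where "P12 = b # L3 @ [c]"
    define P02 where "P02 = rev (L1 @ [a]) @ Q @ rev (c # L4)"
    define P03 where "P03 = a # R1 @ [z]"
    define P13 where "P13 = b # rev R2 @ [z]"
    define P23 where "P23 = c # S' @ [z]"
    have pD: "set (L1 @ a # L2 @ b # L3 @ c # L4) \<inter> D = {}" using DC(2) pdec by auto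
    have QC': "set Q \<subseteq> C'" using Q(1) unfolding path_in_def by blast
    have Qd: "distinct Q" "Q \<noteq> []" "successively (\<lambda>x y. {x,y} \<in> E) Q" using Q(1) by (simp_all add: path_in_iff)
    have Rd: "distinct (R1 @ z # R2)" "successively (\<lambda>x y. {x,y} \<in> E) (R1 @ z # R2)"
      using R(1) Rdec by (simp_all add: path_in_iff)
    have Sd: "distinct (S' @ [z])" "successively (\<lambda>x y. {x,y} \<in> E) (S' @ [z])"
      using S(1) Sdec by (simp_all add: is_path_iff)
    have S'R: "set S' \<inter> set (R1 @ z # R2) = {}" using S(5) Rdec unfolding S'_def by simp
    have RD': "set (R1 @ z # R2) \<subseteq> D" using RD Rdec by simp
    have SD': "set (S' @ [z]) \<subseteq> D" using SD Sdec by simp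
    have sC': "s \<notin> C'" "t \<notin> C'" using C'V by auto
    have DV: "D \<subseteq> V" using DC CV by blast
    have C'V2: "C' \<subseteq> V" using C'V by blast
    have CV2: "C \<subseteq> V" using CV by blast
    let ?E = "\<lambda>x y. {x,y} \<in> E"
    have sp01: "successively ?E (a # L2 @ [b])"
      using succ_infix[of ?E L1 "a # L2 @ [b]" "L3 @ c # L4"] psucc by simp
    have sp12: "successively ?E (b # L3 @ [c])"
      using succ_infix[of ?E "L1 @ a # L2" "b # L3 @ [c]" "L4"] psucc by simp
    have spL1: "successively ?E (L1 @ [a])"
      using succ_infix[of ?E "[]" "L1 @ [a]" "L2 @ b # L3 @ c # L4"] psucc by simp
    have spL4: "successively ?E (c # L4)"
      using succ_infix[of ?E "L1 @ a # L2 @ b # L3" "c # L4" "[]"] psucc by simp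
    have sR1: "successively ?E (R1 @ [z])"
      using succ_infix[of ?E "[]" "R1 @ [z]" "R2"] Rd(2) by simp
    have sR2: "successively ?E (z # R2)"
      using succ_infix[of ?E "R1" "z # R2" "[]"] Rd(2) by simp
    have hR1: "hd (R1 @ [z]) = da" using R(2) Rdec by (cases R1) auto
    have lR2: "last (z # R2) = db" using R(3) Rdec by (cases R2) auto
    have hS: "hd (S' @ [z]) = dc" using S(2) Sdec by simp
    have eus: "?E s (hd Q)" using us Q(2) by simp
    have eut: "?E (last Q) t" using ut Q(3) by (simp add: insert_commute)
    have srev1: "successively ?E (rev (L1 @ [a]))" using succ_rev_E[OF spL1] .
    have srev4: "successively ?E (rev (c # L4))" using succ_rev_E[OF spL4] .
    have srevR2: "successively ?E (rev (z # R2))" using succ_rev_E[OF sR2] .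
    have e1: "last (rev (L1@[a])) = s" using hdL1 by (simp only: last_rev)
    have e2: "hd (rev (c#L4)) = t" using lastL4 by (simp only: hd_rev)
    have sP02: "successively ?E P02" unfolding P02_def
      apply (rule succ_app3[OF srev1 Qd(3) srev4])
      apply (simp_all only: e1 e2 eus eut Qd(2) rev_is_Nil_conv)
      apply simp_all
      done
    have sP03: "successively ?E P03" unfolding P03_def successively_Cons
      using sR1 hR1 da(2) by simp
    have sP13: "successively ?E P13"
    proof -
      have "P13 = b # rev (z # R2)" unfolding P13_def by simp
      have e3: "hd (rev (z#R2)) = db" using lR2 by (simp only: hd_rev)
      have "successively ?E (b # rev (z # R2))" unfolding successively_Cons
        apply (rule disjI2, rule conjI)
         apply (simp only: e3 db(2))
        apply (rule srevR2)
        done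
      then show ?thesis using \<open>P13 = b # rev (z # R2)\<close> by simp
    qed
    have sP23: "successively ?E P23" unfolding P23_def successively_Cons
      using Sd(2) hS dc(2) by simp
    have pV': "set (L1 @ a # L2 @ b # L3 @ c # L4) \<subseteq> V" using pV pdec by simp
    have d01: "distinct (a # L2 @ [b])"
      using distinct_infix[of L1 "a # L2 @ [b]" "L3 @ c # L4"] pdist by simp
    have d12: "distinct (b # L3 @ [c])"
      using distinct_infix[of "L1 @ a # L2" "b # L3 @ [c]" "L4"] pdist by simp
    have dL1: "distinct (L1 @ [a])"
      using distinct_infix[of "[]" "L1 @ [a]" "L2 @ b # L3 @ c # L4"] pdist by simp
    have dL4: "distinct (c # L4)"
      using distinct_infix[of "L1 @ a # L2 @ b # L3" "c # L4" "[]"] pdist by simp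
    have dL14: "set (L1 @ [a]) \<inter> set (c # L4) = {}"
      using distinct_outer[of "L1 @ [a]" "L2 @ b # L3" "c # L4"] pdist by simp
    have Qp: "set Q \<inter> set (L1 @ a # L2 @ b # L3 @ c # L4) = {}"
      using QC' pset CC' sC' by blast
    have QD: "set Q \<inter> D = {}" using QC' DC(1) CC' by blast
    have d02: "distinct P02" unfolding P02_def distinct_append
      using dL1 dL4 dL14 Qd(1) Qp by auto
    have dR1: "distinct (R1 @ [z])" using distinct_infix[of "[]" "R1 @ [z]" R2] Rd(1) by simp
    have dR2: "distinct (z # R2)" using distinct_infix[of R1 "z # R2" "[]"] Rd(1) by simp
    have aD: "a \<notin> D" "b \<notin> D" "c \<notin> D" using pD by auto
    have d03: "distinct P03" unfolding P03_def using dR1 aD RD' by auto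
    have d13: "distinct P13" unfolding P13_def using dR2 aD RD' by auto
    have d23: "distinct P23" unfolding P23_def using Sd(1) aD SD' by auto
    have V01: "set P01 \<subseteq> V" unfolding P01_def using pV' by auto
    have V12: "set P12 \<subseteq> V" unfolding P12_def using pV' by auto
    have V02: "set P02 \<subseteq> V" unfolding P02_def using pV' QC' C'V2 by auto
    have V03: "set P03 \<subseteq> V" unfolding P03_def using pV' RD' DV by auto
    have V13: "set P13 \<subseteq> V" unfolding P13_def using pV' RD' DV by auto
    have V23: "set P23 \<subseteq> V" unfolding P23_def using pV' SD' DV by auto
    note facts = pdist pD pset QC' Qd(1) Rd(1) Sd(1) S'R RD' SD' sC' CC' DC(1) st
    have "has_K4_subdivision V E"
    proof (rule k4_intro[of a b c z V E P01 P02 P03 P12 P13 P23])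
      show "distinct [a,b,c,z]" using facts by auto
      show "{a, b, c, z} \<subseteq> V" using facts DV CV2 by auto
      show "hd P01 = a" "last P01 = b" unfolding P01_def by simp_all
      show "hd P12 = b" "last P12 = c" unfolding P12_def by simp_all
      show "hd P02 = a" "last P02 = c" unfolding P02_def by simp_all
      show "hd P03 = a" "last P03 = z" unfolding P03_def by simp_all
      show "hd P13 = b" "last P13 = z" unfolding P13_def by simp_all
      show "hd P23 = c" "last P23 = z" unfolding P23_def by simp_all
      have zD: "z \<in> D" using RD' by simp
      note at = pdist[simplified] pD[simplified] Qp[simplified] QD Rd(1)[simplified] Sd(1)[simplified] S'R[simplified]
        RD'[simplified] SD'[simplified] zD
      show "set P01 \<inter> {a, b, c, z} = {a, b}" unfolding P01_def using at by auto
      show "set P12 \<inter> {a, b, c, z} = {b, c}" unfolding P12_def using at by auto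
      show "set P02 \<inter> {a, b, c, z} = {a, c}" unfolding P02_def using at by auto
      show "set P03 \<inter> {a, b, c, z} = {a, z}" unfolding P03_def using at by auto
      show "set P13 \<inter> {a, b, c, z} = {b, z}" unfolding P13_def using at by auto
      show "set P23 \<inter> {a, b, c, z} = {c, z}" unfolding P23_def using at by auto
      show "set P01 \<inter> set P02 \<subseteq> {a, b, c, z}" unfolding P01_def P02_def using at by auto
      show "set P01 \<inter> set P03 \<subseteq> {a, b, c, z}" unfolding P01_def P03_def using at by auto
      show "set P01 \<inter> set P12 \<subseteq> {a, b, c, z}" unfolding P01_def P12_def using at by auto
      show "set P01 \<inter> set P13 \<subseteq> {a, b, c, z}" unfolding P01_def P13_def using at by auto
      show "set P01 \<inter> set P23 \<subseteq> {a, b, c, z}" unfolding P01_def P23_def using at by auto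
      show "set P02 \<inter> set P03 \<subseteq> {a, b, c, z}" unfolding P02_def P03_def using at by auto
      show "set P02 \<inter> set P12 \<subseteq> {a, b, c, z}" unfolding P02_def P12_def using at by auto
      show "set P02 \<inter> set P13 \<subseteq> {a, b, c, z}" unfolding P02_def P13_def using at by auto
      show "set P02 \<inter> set P23 \<subseteq> {a, b, c, z}" unfolding P02_def P23_def using at by auto
      show "set P03 \<inter> set P12 \<subseteq> {a, b, c, z}" unfolding P03_def P12_def using at by auto
      show "set P03 \<inter> set P13 \<subseteq> {a, b, c, z}" unfolding P03_def P13_def using at by auto
      show "set P03 \<inter> set P23 \<subseteq> {a, b, c, z}" unfolding P03_def P23_def using at by auto
      show "set P12 \<inter> set P13 \<subseteq> {a, b, c, z}" unfolding P12_def P13_def using at by auto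
      show "set P12 \<inter> set P23 \<subseteq> {a, b, c, z}" unfolding P12_def P23_def using at by auto
      show "set P13 \<inter> set P23 \<subseteq> {a, b, c, z}" unfolding P13_def P23_def using at by auto
      show "path_in E V P01" unfolding path_in_iff using sp01 d01 V01 by (simp add: P01_def)
      show "path_in E V P12" unfolding path_in_iff using sp12 d12 V12 by (simp add: P12_def)
      show "path_in E V P02" unfolding path_in_iff using sP02 d02 V02 by (simp add: P02_def)
      show "path_in E V P03" unfolding path_in_iff using sP03 d03 V03 by (simp add: P03_def)
      show "path_in E V P13" unfolding path_in_iff using sP13 d13 V13 by (simp add: P13_def)
      show "path_in E V P23" unfolding path_in_iff using sP23 d23 V23 by (simp add: P23_def)
    qed
    then show False using nk4 by simp
  qed
  show "card {x \<in> set p. \<exists>y\<in>D. {x, y} \<in> E} = 2" using lower upper unfolding N_def by simp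
qed


theorem claim2:
  fixes V :: "'a set" and E :: "'a set set" and s t :: 'a
    and C1 C2 :: "'a set" and p1 p2 :: "'a list"
  assumes "graph V E"
    and "series_parallel V E"
    and "no_transitive_edges V E"
    and "\<forall>u w. sep_pair V E u w \<longrightarrow> num_heavy V E u w \<le> 2"
    and "\<exists>u w. sep_pair V E u w"
    and "sep_pair V E s t"
    and "\<forall>u w. sep_pair V E u w \<longrightarrow> num_heavy V E u w \<le> num_heavy V E s t"
    and "comp_wrt V E s t C1" and "comp_wrt V E s t C2" and "C1 \<noteq> C2"
    and "num_heavy V E s t \<ge> 1 \<longrightarrow> heavy E s t C1"
    and "num_heavy V E s t = 2 \<longrightarrow> heavy E s t C2"
    and "longest_st_path E s t C1 p1"
    and "longest_st_path E s t C2 p2"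
  shows "comps_attach_twice E s t C1 p1 \<and> comps_attach_twice E s t C2 p2"
proof -
  have bc: "biconnected V E" and nk4: "\<not> has_K4_subdivision V E"
    using assms(2) unfolding series_parallel_def by blast+
  have st: "s \<in> V" "t \<in> V" "s \<noteq> t" using assms(6) unfolding sep_pair_def by blast+
  have p1: "path_in E (C1 \<union> {s,t}) p1" "hd p1 = s" "last p1 = t"
    using assms(13) unfolding longest_st_path_def by blast+
  have p2: "path_in E (C2 \<union> {s,t}) p2" "hd p2 = s" "last p2 = t"
    using assms(14) unfolding longest_st_path_def by blast+
  have "comps_attach_twice E s t C1 p1"
    using main_lemma[OF assms(1) bc nk4 st assms(8) assms(9) assms(10) p1] .
  moreover have "comps_attach_twice E s t C2 p2"
    using main_lemma[OF assms(1) bc nk4 st assms(9) assms(8) assms(10)[symmetric] p2] .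
  ultimately show ?thesis by blast
qed

end
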